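(* Let $f:\mathbb{E}\to\mathbb{R}$ be radially lower semicontinuous on some neighborhood of $x\in\mathbb{E}$ and $\ell$-stable at $x$, and suppose $f'_D(x;u)=0$ for all $u\in\mathbb{E}$. Then for every $h\in\mathbb{E}$ the limit \[ \lim_{t\downarrow 0,\,h'\to h}\frac{f(x+th')-f(x+th)}{t^2} \] exists and equals $0$.
   Context: $\mathbb{E}$ is a real finite-dimensional Euclidean space. The lower Dini directional derivative is $f'_D(y;u)=\liminf_{t\downarrow 0}t^{-1}[f(y+tu)-f(y)]$. $f$ is radially lower semicontinuous on a set $U$ iff for every $y\in U$ and direction $v$ the function $s\mapsto f(y+sv)$ is lower semicontinuous on $\{s: y+sv\in U\}$. $f$ is $\ell$-stable at $x$ iff there exist a neighborhood $U$ of $x$ and $K>0$ with $|f'_D(y;u)-f'_D(x;u)|\le K\|y-x\|\,\|u\|$ for all $y\in U$, $u\in\mathbb{E}$. *)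

theory Defs
  imports "HOL-Analysis.Analysis"
begin

definition lower_dini :: "('a::real_normed_vector \<Rightarrow> real) \<Rightarrow> 'a \<Rightarrow> 'a \<Rightarrow> ereal" where
  "lower_dini f y u = Liminf (at_right 0) (\<lambda>t. ereal ((f (y + t *\<^sub>R u) - f y) / t))"

definition lsc_on :: "real set \<Rightarrow> (real \<Rightarrow> real) \<Rightarrow> bool" where
  "lsc_on S g \<longleftrightarrow> (\<forall>s\<in>S. \<forall>c. c < g s \<longrightarrow> (\<forall>\<^sub>F s' in at s within S. c < g s'))"

definition radially_lsc_on :: "('a::real_normed_vector \<Rightarrow> real) \<Rightarrow> 'a set \<Rightarrow> bool" where
  "radially_lsc_on f U \<longleftrightarrow>
     (\<forall>y\<in>U. \<forall>v. lsc_on {s. y + s *\<^sub>R v \<in> U} (\<lambda>s. f (y + s *\<^sub>R v)))"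

definition l_stable :: "('a::real_normed_vector \<Rightarrow> real) \<Rightarrow> 'a \<Rightarrow> bool" where
  "l_stable f x \<longleftrightarrow> (\<exists>U K. open U \<and> x \<in> U \<and> K > 0 \<and>
     (\<forall>y\<in>U. \<forall>u. \<bar>lower_dini f y u - lower_dini f x u\<bar> \<le> ereal (K * norm (y - x) * norm u)))"

end

theory Submission imports Defs begin

lemma lemA:
  fixes g :: "real \<Rightarrow> real"
  assumes lsc: "\<forall>s\<in>{0..1}. \<forall>c. c < g s \<longrightarrow> (\<forall>\<^sub>F s' in at s within {0..1}. c < g s')"
   and dini: "\<forall>s\<in>{0<..1}. Liminf (at_right 0) (\<lambda>\<tau>. ereal ((g (s - \<tau>) - g s)/\<tau>)) \<le> ereal M"
  shows "g 0 - g 1 \<le> M"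
proof (rule field_le_epsilon)
  fix e :: real assume e: "0 < e"
  define M' where "M' = M + e"
  define \<phi> where "\<phi> s = g s + M' * s" for s
  show "g 0 - g 1 \<le> M + e"
  proof (rule ccontr)
    assume "\<not> ?thesis"
    then have lt: "\<phi> 1 < \<phi> 0" by (simp add: \<phi>_def M'_def)
    define A where "A = {s\<in>{0..1}. \<phi> s \<le> \<phi> 1}"
    define s0 where "s0 = Inf A"
    have A1: "1 \<in> A" by (simp add: A_def)
    have bdd: "bdd_below A" unfolding A_def by (rule bdd_belowI[of _ 0]) auto
    have s0_le: "\<And>a. a\<in>A \<Longrightarrow> s0 \<le> a" unfolding s0_def using bdd by (simp add: cInf_lower)
    have s0_ge: "0 \<le> s0" unfolding s0_def using A1 by (intro cInf_greatest) (auto simp: A_def)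
    have s0_1: "s0 \<le> 1" using s0_le[OF A1] .
    have s0A: "\<phi> s0 \<le> \<phi> 1"
    proof (rule ccontr)
      assume nA: "\<not> \<phi> s0 \<le> \<phi> 1"
      define \<delta> where "\<delta> = (\<phi> s0 - \<phi> 1) / 2"
      have d: "\<delta> > 0" using nA by (simp add: \<delta>_def)
      have "\<forall>\<^sub>F s' in at s0 within {0..1}. g s0 - \<delta> < g s'"
        using lsc s0_ge s0_1 d by auto
      moreover have "((\<lambda>s'. M' * s') \<longlongrightarrow> M' * s0) (at s0 within {0..1})"
        by (intro tendsto_intros)
      then have "\<forall>\<^sub>F s' in at s0 within {0..1}. dist (M' * s') (M' * s0) < \<delta>"
        using d tendstoD by blast
      ultimately have "\<forall>\<^sub>F s' in at s0 within {0..1}. \<phi> 1 < \<phi> s'"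
        proof eventually_elim
          case (elim s')
          have "\<bar>M' * s' - M' * s0\<bar> < \<delta>" using elim(2) by (simp add: dist_real_def)
          then have "M' * s0 - \<delta> < M' * s'" by linarith
          moreover have "2 * \<delta> = \<phi> s0 - \<phi> 1" by (simp add: \<delta>_def)
          ultimately show ?case using elim(1) unfolding \<phi>_def by linarith
        qed
      then obtain d' where d': "d' > 0" "\<And>s'. s' \<in> {0..1} \<Longrightarrow> s' \<noteq> s0 \<Longrightarrow> dist s' s0 < d' \<Longrightarrow> \<phi> 1 < \<phi> s'"
        unfolding eventually_at by blast
      have "A \<noteq> {}" using A1 by blast
      then obtain a where a: "a \<in> A" "a < s0 + d'"
        using cInf_lessD[of A "s0 + d'"] d' unfolding s0_def by auto
      have "a \<noteq> s0" using a(1) nA by (auto simp: A_def)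
      moreover have "s0 \<le> a" using s0_le a(1) by auto
      ultimately have "\<phi> 1 < \<phi> a" using d'(2)[of a] a by (auto simp: A_def dist_real_def)
      then show False using a(1) by (auto simp: A_def)
    qed
    have s0pos: "0 < s0" using s0A lt s0_ge by (cases "s0 = 0") auto
    have "Liminf (at_right 0) (\<lambda>\<tau>. ereal ((g (s0 - \<tau>) - g s0)/\<tau>)) \<le> ereal M"
      using dini s0pos s0_1 by auto
    also have "\<dots> < ereal M'" using e by (simp add: M'_def)
    finally have "\<not> ereal M' \<le> Liminf (at_right 0) (\<lambda>\<tau>. ereal ((g (s0 - \<tau>) - g s0)/\<tau>))" by simp
    then obtain y where y: "y < ereal M'" "\<not> (\<forall>\<^sub>F \<tau> in at_right 0. y < ereal ((g (s0 - \<tau>) - g s0)/\<tau>))"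
      unfolding le_Liminf_iff by blast
    have ev: "\<forall>\<^sub>F \<tau> in at_right 0. \<tau> \<in> {0<..<s0}" using eventually_at_right_real s0pos by blast
    obtain \<tau> where \<tau>: "\<tau> \<in> {0<..<s0}" "\<not> y < ereal ((g (s0 - \<tau>) - g s0)/\<tau>)"
    proof -
      { assume "\<forall>\<tau>. \<tau> \<in> {0<..<s0} \<longrightarrow> y < ereal ((g (s0 - \<tau>) - g s0)/\<tau>)"
        then have "\<forall>\<^sub>F \<tau> in at_right 0. y < ereal ((g (s0 - \<tau>) - g s0)/\<tau>)"
          using ev by (auto elim: eventually_mono) }
      then show ?thesis using that y(2) by blast
    qed
    have "(g (s0 - \<tau>) - g s0)/\<tau> < M'" proof -
      have "ereal ((g (s0 - \<tau>) - g s0)/\<tau>) < ereal M'" using \<tau>(2) y(1) unfolding not_less by (rule le_less_trans)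
      then show ?thesis by simp
    qed
    then have "g (s0 - \<tau>) - g s0 < M' * \<tau>" using \<tau>(1) by (simp add: divide_less_eq)
    then have "\<phi> (s0 - \<tau>) < \<phi> s0" by (simp add: \<phi>_def algebra_simps)
    then have "s0 - \<tau> \<in> A" using s0A \<tau>(1) s0_1 by (auto simp: A_def)
    then show False using s0_le \<tau>(1) by fastforce
  qed
qed

lemma inball: "norm (z - x) \<le> a \<Longrightarrow> a < r \<Longrightarrow> z \<in> ball x r"
  by (simp add: dist_norm norm_minus_commute)

lemma lemB:
  fixes f :: "'a::euclidean_space \<Rightarrow> real"
  assumes rad: "radially_lsc_on f U" and yU: "y \<in> U"
  and seg: "\<And>s. s \<in> {0..1} \<Longrightarrow> y + s *\<^sub>R v \<in> U \<and> y + s *\<^sub>R v \<in> V"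
  and stab: "\<And>z u. z \<in> V \<Longrightarrow> lower_dini f z u \<le> ereal (K * norm (z - x) * norm u)"
  and R: "\<And>s. s \<in> {0..1} \<Longrightarrow> norm (y + s *\<^sub>R v - x) \<le> R" and K: "K \<ge> 0"
  shows "f y - f (y + v) \<le> K * R * norm v"
proof -
  define g where "g s = f (y + s *\<^sub>R v)" for s
  have "g 0 - g 1 \<le> K * R * norm v"
  proof (rule lemA)
    have L: "lsc_on {s. y + s *\<^sub>R v \<in> U} g" using rad yU unfolding radially_lsc_on_def g_def by blast
    have sub: "{0..1} \<subseteq> {s. y + s *\<^sub>R v \<in> U}" using seg by auto
    show "\<forall>s\<in>{0..1}. \<forall>c. c < g s \<longrightarrow> (\<forall>\<^sub>F s' in at s within {0..1}. c < g s')"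
    proof (intro ballI allI impI)
      fix s c assume s: "s \<in> {0..(1::real)}" and c: "c < g s"
      have "\<forall>\<^sub>F s' in at s within {s. y + s *\<^sub>R v \<in> U}. c < g s'"
        using L s c sub unfolding lsc_on_def by blast
      then show "\<forall>\<^sub>F s' in at s within {0..1}. c < g s'"
        by (rule filter_leD[OF at_le[OF sub]])
    qed
    show "\<forall>s\<in>{0<..1}. Liminf (at_right 0) (\<lambda>\<tau>. ereal ((g (s - \<tau>) - g s)/\<tau>)) \<le> ereal (K * R * norm v)"
    proof
      fix s :: real assume s: "s \<in> {0<..1}"
      define z where "z = y + s *\<^sub>R v"
      have eq: "(\<lambda>\<tau>. ereal ((g (s - \<tau>) - g s)/\<tau>)) = (\<lambda>\<tau>. ereal ((f (z + \<tau> *\<^sub>R (- v)) - f z)/\<tau>))"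
        by (rule ext) (simp add: g_def z_def algebra_simps)
      have zV: "z \<in> V" using seg s by (auto simp: z_def)
      have "K * norm (z - x) * norm (- v) \<le> K * R * norm v"
        using R[of s] s K by (auto simp: z_def intro!: mult_right_mono mult_left_mono)
      then show "Liminf (at_right 0) (\<lambda>\<tau>. ereal ((g (s - \<tau>) - g s)/\<tau>)) \<le> ereal (K * R * norm v)"
        using stab[OF zV, of "- v"] unfolding eq lower_dini_def[symmetric]
        by (meson ereal_less_eq(3) order_trans)
    qed
  qed
  then show ?thesis by (simp add: g_def)
qed

theorem lemma4:
  fixes f :: "'a::euclidean_space \<Rightarrow> real" and x :: 'a
  assumes "\<exists>U. open U \<and> x \<in> U \<and> radially_lsc_on f U"
    and "l_stable f x"
    and "\<And>u. lower_dini f x u = 0"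
  shows "\<forall>h. ((\<lambda>(t, h'). (f (x + t *\<^sub>R h') - f (x + t *\<^sub>R h)) / t\<^sup>2) \<longlongrightarrow> 0)
               (at_right 0 \<times>\<^sub>F nhds h)"
proof
  fix h :: 'a
  obtain U where U: "open U" "x \<in> U" "radially_lsc_on f U" using assms(1) by blast
  obtain V K where V: "open V" "x \<in> V" "K > 0"
    and VK: "\<forall>y\<in>V. \<forall>u. \<bar>lower_dini f y u - lower_dini f x u\<bar> \<le> ereal (K * norm (y - x) * norm u)"
    using assms(2) unfolding l_stable_def by blast
  have stab: "\<And>z u. z \<in> V \<Longrightarrow> lower_dini f z u \<le> ereal (K * norm (z - x) * norm u)"
  proof -
    fix z u assume "z \<in> V"
    then have "\<bar>lower_dini f z u\<bar> \<le> ereal (K * norm (z - x) * norm u)" using VK assms(3) by simp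
    moreover have "lower_dini f z u \<le> \<bar>lower_dini f z u\<bar>" by (cases "lower_dini f z u") auto
    ultimately show "lower_dini f z u \<le> ereal (K * norm (z - x) * norm u)" by (rule order_trans[rotated])
  qed
  obtain r where r: "r > 0" "ball x r \<subseteq> U \<inter> V" using U V open_Int open_contains_ball by (metis IntI)
  define C where "C = norm h + 2"
  have C: "C > 0" by (simp add: C_def add_nonneg_pos)
  have ev: "\<forall>\<^sub>F p in at_right 0 \<times>\<^sub>F nhds h.
     norm ((\<lambda>(t, h'). (f (x + t *\<^sub>R h') - f (x + t *\<^sub>R h)) / t\<^sup>2) p) \<le> K * C * norm (snd p - h)"
    unfolding eventually_prod_filter
  proof (intro exI conjI allI impI)
    show "\<forall>\<^sub>F t in at_right 0. t \<in> {0<..<r / C}" using eventually_at_right_real r C by simp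
    show "\<forall>\<^sub>F h' in nhds h. h' \<in> ball h 1" by (rule eventually_nhds_in_open) auto
    fix t h' assume t: "t \<in> {0<..<r / C}" and h': "h' \<in> ball h 1"
    have tC: "t * C < r" using t C by (simp add: pos_less_divide_eq)
    have nh: "norm (h' - h) < 1" using h' by (simp add: dist_norm norm_minus_commute)
    have b1: "f (x + t *\<^sub>R h) - f (x + t *\<^sub>R h + t *\<^sub>R (h' - h)) \<le> K * (t * C) * norm (t *\<^sub>R (h' - h))"
    proof (rule lemB[OF U(3) _ _ stab _ less_imp_le[OF V(3)]])
      fix s :: real assume s: "s \<in> {0..1}"
      have "x + t *\<^sub>R h + s *\<^sub>R t *\<^sub>R (h' - h) - x = t *\<^sub>R (h + s *\<^sub>R (h' - h))"
        by (simp add: algebra_simps)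
      then have "norm (x + t *\<^sub>R h + s *\<^sub>R t *\<^sub>R (h' - h) - x) = t * norm (h + s *\<^sub>R (h' - h))"
        using t by simp
      also have "\<dots> \<le> t * (norm h + norm (h' - h))"
        using t s by (auto intro!: mult_left_mono order_trans[OF norm_triangle_ineq] simp: mult_left_le_one_le)
      also have "\<dots> \<le> t * C" using t nh by (auto simp: C_def intro!: mult_left_mono)
      finally show "norm (x + t *\<^sub>R h + s *\<^sub>R t *\<^sub>R (h' - h) - x) \<le> t * C" .
      then show "x + t *\<^sub>R h + s *\<^sub>R t *\<^sub>R (h' - h) \<in> U \<and> x + t *\<^sub>R h + s *\<^sub>R t *\<^sub>R (h' - h) \<in> V"
        using inball[OF _ tC] r by blast
    next
      have "norm (x + t *\<^sub>R h - x) \<le> t * C" using t by (simp add: C_def)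
      then show "x + t *\<^sub>R h \<in> U" using inball[OF _ tC] r by blast
    qed
    have b2: "f (x + t *\<^sub>R h') - f (x + t *\<^sub>R h' + t *\<^sub>R (h - h')) \<le> K * (t * C) * norm (t *\<^sub>R (h - h'))"
    proof (rule lemB[OF U(3) _ _ stab _ less_imp_le[OF V(3)]])
      fix s :: real assume s: "s \<in> {0..1}"
      have "x + t *\<^sub>R h' + s *\<^sub>R t *\<^sub>R (h - h') - x = t *\<^sub>R (h' + s *\<^sub>R (h - h'))"
        by (simp add: algebra_simps)
      then have "norm (x + t *\<^sub>R h' + s *\<^sub>R t *\<^sub>R (h - h') - x) = t * norm (h' + s *\<^sub>R (h - h'))"
        using t by simp
      also have "\<dots> \<le> t * (norm h' + norm (h - h'))"
        using t s by (auto intro!: mult_left_mono order_trans[OF norm_triangle_ineq] simp: mult_left_le_one_le)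
      also have "\<dots> \<le> t * C"
      proof -
        have "norm h' \<le> norm h + norm (h' - h)" by (metis add.commute diff_add_cancel norm_triangle_ineq)
        then show ?thesis using t nh by (auto simp: C_def norm_minus_commute intro!: mult_left_mono)
      qed
      finally show "norm (x + t *\<^sub>R h' + s *\<^sub>R t *\<^sub>R (h - h') - x) \<le> t * C" .
      then show "x + t *\<^sub>R h' + s *\<^sub>R t *\<^sub>R (h - h') \<in> U \<and> x + t *\<^sub>R h' + s *\<^sub>R t *\<^sub>R (h - h') \<in> V"
        using inball[OF _ tC] r by blast
    next
      have "norm h' \<le> norm h + norm (h' - h)" by (metis add.commute diff_add_cancel norm_triangle_ineq)
      then have "norm (x + t *\<^sub>R h' - x) \<le> t * C" using t nh by (auto simp: C_def intro!: mult_left_mono)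
      then show "x + t *\<^sub>R h' \<in> U" using inball[OF _ tC] r by blast
    qed
    have e1: "x + t *\<^sub>R h + t *\<^sub>R (h' - h) = x + t *\<^sub>R h'" by (simp add: algebra_simps)
    have e2: "x + t *\<^sub>R h' + t *\<^sub>R (h - h') = x + t *\<^sub>R h" by (simp add: algebra_simps)
    have nn: "norm (t *\<^sub>R (h - h')) = t * norm (h' - h)" "norm (t *\<^sub>R (h' - h)) = t * norm (h' - h)"
      using t by (auto simp: norm_minus_commute)
    have "\<bar>f (x + t *\<^sub>R h') - f (x + t *\<^sub>R h)\<bar> \<le> K * (t * C) * (t * norm (h' - h))"
      using b1 b2 unfolding e1 e2 nn by linarith
    also have "\<dots> = (K * C * norm (h' - h)) * t\<^sup>2" by (simp add: power2_eq_square)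
    finally have "\<bar>f (x + t *\<^sub>R h') - f (x + t *\<^sub>R h)\<bar> / t\<^sup>2 \<le> K * C * norm (h' - h)"
      using t by (simp add: divide_le_eq)
    then show "norm ((\<lambda>(t, h'). (f (x + t *\<^sub>R h') - f (x + t *\<^sub>R h)) / t\<^sup>2) (t, h')) \<le> K * C * norm (snd (t, h') - h)"
      by simp
  qed
  have lim: "((\<lambda>p. K * C * norm (snd p - h)) \<longlongrightarrow> 0) (at_right 0 \<times>\<^sub>F nhds h)"
  proof -
    have sn: "(snd \<longlongrightarrow> h) (at_right 0 \<times>\<^sub>F nhds h)" by (rule filterlim_snd)
    have "((\<lambda>p. K * C * norm (snd p - h)) \<longlongrightarrow> K * C * norm (h - h)) (at_right 0 \<times>\<^sub>F nhds h)"
      by (intro tendsto_intros sn)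
    then show ?thesis by simp
  qed
  show "((\<lambda>(t, h'). (f (x + t *\<^sub>R h') - f (x + t *\<^sub>R h)) / t\<^sup>2) \<longlongrightarrow> 0) (at_right 0 \<times>\<^sub>F nhds h)"
    by (rule Lim_null_comparison[OF ev lim])
qed

end
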